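(* Let $F$ be a finite extension of $\mathbb{Q}_2$ with absolute ramification index $e_F$, and let $E/F$ be a ramified quadratic extension whose break number $b$ is odd. If $\kappa\in F^*\setminus(E^* )^2$, then $$\mathrm{def}_E(\kappa)\ge g_{F,b}(\mathrm{def}_F(\kappa)),$$ with equality whenever $\mathrm{def}_F(\kappa)\ne 2e_F-b$. Consequently, if $\delta\ge0$ and $\mathrm{def}_F(\kappa)\ge\delta$, then $\mathrm{def}_E(\kappa)\ge g_{F,b}(\delta)\ge b$.
   Context: $v_F$ denotes the normalized valuation of $F$. Quadratic defect: for $\kappa\in F^*$, $\mathrm{def}_F(\kappa)=\infty$ if $\kappa\in (F^* )^2$, $\mathrm{def}_F(\kappa)=0$ if $v_F(\kappa)$ is odd, and otherwise $\mathrm{def}_F(\kappa)=\max\{v_F(c^2\kappa-1): c\in F^*\}$. The break number of a ramified quadratic extension $E/F$ with $\mathrm{Gal}(E/F)=\{1,s\}$ is $v_E(s(\pi_E)-\pi_E)-1$. The function $g_{F,b}$ is $g_{F,b}(x)=\min\{2x+b,\,x+2e_F\}$. *)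

theory Defs
  imports "HOL-Analysis.Analysis"
begin

text \<open>A normalized discrete valuation on a field, given as a map to int
  (its value at 0 is irrelevant; v 0 = infinity is left implicit).\<close>
definition normalized_dval :: "('a::field \<Rightarrow> int) \<Rightarrow> bool" where
  "normalized_dval v \<longleftrightarrow>
     (\<forall>x y. x \<noteq> 0 \<longrightarrow> y \<noteq> 0 \<longrightarrow> v (x * y) = v x + v y) \<and>
     (\<forall>x y. x \<noteq> 0 \<longrightarrow> y \<noteq> 0 \<longrightarrow> x + y \<noteq> 0 \<longrightarrow> min (v x) (v y) \<le> v (x + y)) \<and>
     (\<exists>p. p \<noteq> 0 \<and> v p = 1)"

definition val_complete :: "('a::field \<Rightarrow> int) \<Rightarrow> bool" where
  "val_complete v \<longleftrightarrow>
     (\<forall>X :: nat \<Rightarrow> 'a.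
        (\<forall>N::int. \<exists>M. \<forall>m\<ge>M. \<forall>n\<ge>M. X m = X n \<or> N \<le> v (X m - X n)) \<longrightarrow>
        (\<exists>L. \<forall>N::int. \<exists>M. \<forall>n\<ge>M. X n = L \<or> N \<le> v (X n - L)))"

definition finite_residue_field :: "('a::field \<Rightarrow> int) \<Rightarrow> bool" where
  "finite_residue_field v \<longleftrightarrow>
     (\<exists>R. finite R \<and> (\<forall>x. (x = 0 \<or> 0 \<le> v x) \<longrightarrow> (\<exists>r\<in>R. x = r \<or> 0 < v (x - r))))"

text \<open>A finite extension of Q_2, characterized (for a field of characteristic 0)
  as a field complete for a normalized discrete valuation with finite residue
  field of characteristic 2 (i.e. v 2 > 0).\<close>
definition local_field_over_Q2 :: "('a::field_char_0 \<Rightarrow> int) \<Rightarrow> bool" where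
  "local_field_over_Q2 v \<longleftrightarrow>
     normalized_dval v \<and> val_complete v \<and> finite_residue_field v \<and> 0 < v 2"

definition abs_ram_index :: "('a::field_char_0 \<Rightarrow> int) \<Rightarrow> int" where
  "abs_ram_index v = v 2"

text \<open>Quadratic defect (value infinity encoded as ereal infinity; the maximum
  is expressed as a supremum, which equals the maximum when it exists).\<close>
definition qdef :: "('a::field \<Rightarrow> int) \<Rightarrow> 'a \<Rightarrow> ereal" where
  "qdef v k =
     (if \<exists>c. c \<noteq> 0 \<and> k = c\<^sup>2 then \<infinity>
      else if odd (v k) then 0
      else Sup {ereal (real_of_int (v (c\<^sup>2 * k - 1))) | c. c \<noteq> 0})"

definition gFb :: "int \<Rightarrow> int \<Rightarrow> ereal \<Rightarrow> ereal" where
  "gFb eF b x = min (2 * x + ereal (real_of_int b)) (x + ereal (real_of_int (2 * eF)))"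

definition field_emb :: "('a::field \<Rightarrow> 'b::field) \<Rightarrow> bool" where
  "field_emb i \<longleftrightarrow> (\<forall>x y. i (x + y) = i x + i y) \<and> (\<forall>x y. i (x * y) = i x * i y) \<and> i 1 = 1"

definition quadratic_over :: "('a::field \<Rightarrow> 'b::field) \<Rightarrow> bool" where
  "quadratic_over i \<longleftrightarrow> (\<exists>t. \<forall>z. \<exists>!ab. z = i (fst ab) + i (snd ab) * t)"

end

theory Submission
  imports Defs
begin


lemma gFb_int: "gFb e b (ereal (real_of_int d)) = ereal (real_of_int (min (2*d+b) (d+2*e)))"
  unfolding gFb_def by (simp add: min_def)

lemma gFb_mono: "x \<le> y \<Longrightarrow> gFb e b x \<le> gFb e b y"
  unfolding gFb_def
  by (intro min.mono add_right_mono ereal_mult_left_mono) auto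

lemma final:
  fixes DF DE :: ereal and dF e b :: int
  assumes DF: "DF = ereal (real_of_int dF)"
    and DE: "DE = gFb e b DF \<or> (dF = 2 * e - b \<and> gFb e b DF \<le> DE)"
    and be: "b < 2 * e"
  shows "DE \<ge> gFb e b DF
    \<and> (DF \<noteq> ereal (real_of_int (2 * e - b)) \<longrightarrow> DE = gFb e b DF)
    \<and> (\<forall>\<delta>::int. 0 \<le> \<delta> \<longrightarrow> DF \<ge> ereal (real_of_int \<delta>) \<longrightarrow>
         DE \<ge> gFb e b (ereal (real_of_int \<delta>))
         \<and> gFb e b (ereal (real_of_int \<delta>)) \<ge> ereal (real_of_int b))"
proof (intro conjI allI impI)
  show g: "gFb e b DF \<le> DE" using DE by auto
  show "DF \<noteq> ereal (real_of_int (2 * e - b)) \<Longrightarrow> DE = gFb e b DF" using DE DF by auto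
  fix \<delta> :: int assume d: "0 \<le> \<delta>" "ereal (real_of_int \<delta>) \<le> DF"
  show "gFb e b (ereal (real_of_int \<delta>)) \<le> DE" using gFb_mono[OF d(2)] g by (rule order_trans)
  show "ereal (real_of_int b) \<le> gFb e b (ereal (real_of_int \<delta>))"
    unfolding gFb_int using d be by simp
qed



locale dv =
  fixes v :: "'a::field_char_0 \<Rightarrow> int"
  assumes nd: "normalized_dval v"
begin

definition vge :: "'a \<Rightarrow> int \<Rightarrow> bool" where
  "vge x m \<longleftrightarrow> x = 0 \<or> m \<le> v x"

lemma vmult: "x \<noteq> 0 \<Longrightarrow> y \<noteq> 0 \<Longrightarrow> v (x * y) = v x + v y"
  using nd unfolding normalized_dval_def by blast

lemma ultra: "x \<noteq> 0 \<Longrightarrow> y \<noteq> 0 \<Longrightarrow> x + y \<noteq> 0 \<Longrightarrow> min (v x) (v y) \<le> v (x + y)"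
  using nd unfolding normalized_dval_def by blast

lemma unif: "\<exists>p. p \<noteq> 0 \<and> v p = 1"
  using nd unfolding normalized_dval_def by blast

lemma v1[simp]: "v 1 = 0"
  using vmult[of 1 1] by simp

lemma vm1[simp]: "v (-1) = 0"
  using vmult[of "-1" "-1"] by simp

lemma vminus[simp]: "v (- x) = v x"
proof (cases "x = 0")
  case True then show ?thesis by simp
next
  case False
  then have "v ((-1) * x) = v (-1) + v x" by (intro vmult) auto
  then show ?thesis by simp
qed

lemma vinv: "x \<noteq> 0 \<Longrightarrow> v (inverse x) = - v x"
  using vmult[of x "inverse x"] by simp

lemma vdiv: "x \<noteq> 0 \<Longrightarrow> y \<noteq> 0 \<Longrightarrow> v (x / y) = v x - v y"
  using vmult[of x "inverse y"] vinv[of y] by (simp add: divide_inverse)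

lemma vpow: "x \<noteq> 0 \<Longrightarrow> v (x ^ n) = int n * v x"
  by (induction n) (auto simp: vmult algebra_simps)

lemma vsq: "x \<noteq> 0 \<Longrightarrow> v (x\<^sup>2) = 2 * v x"
  using vpow[of x 2] by simp

lemma vdiff_sym: "v (x - y) = v (y - x)"
  using vminus[of "x - y"] by simp

lemma strict: assumes "x \<noteq> 0" "y \<noteq> 0" "v x < v y" shows "x + y \<noteq> 0" "v (x + y) = v x"
proof -
  show nz: "x + y \<noteq> 0"
  proof
    assume "x + y = 0" then have "y = - x" by (simp add: add_eq_0_iff)
    then show False using assms by simp
  qed
  have "min (v x) (v y) \<le> v (x + y)" using ultra assms nz by blast
  then have a: "v x \<le> v (x + y)" using assms by simp
  have "min (v (x + y)) (v (- y)) \<le> v ((x + y) + (- y))"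
    using ultra[of "x+y" "-y"] nz assms by simp
  then have "min (v (x + y)) (v y) \<le> v x" by simp
  then show "v (x + y) = v x" using a assms by linarith
qed

lemma vge_0[simp]: "vge 0 m" by (simp add: vge_def)

lemma vge_mono: "vge x m \<Longrightarrow> n \<le> m \<Longrightarrow> vge x n"
  by (auto simp: vge_def)

lemma vge_add: assumes "vge x m" "vge y m" shows "vge (x + y) m"
proof (cases "x = 0 \<or> y = 0 \<or> x + y = 0")
  case True then show ?thesis using assms by (auto simp: vge_def)
next
  case False
  then have "min (v x) (v y) \<le> v (x + y)" by (intro ultra) auto
  then show ?thesis using assms False by (auto simp: vge_def)
qed

lemma vge_minus[simp]: "vge (- x) m = vge x m"
  by (auto simp: vge_def)

lemma vge_diff: "vge x m \<Longrightarrow> vge y m \<Longrightarrow> vge (x - y) m"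
  using vge_add[of x m "-y"] by simp

lemma vge_mult: "vge x m \<Longrightarrow> vge y n \<Longrightarrow> vge (x * y) (m + n)"
  by (cases "x = 0 \<or> y = 0") (auto simp: vge_def vmult)

lemma vge_val: "vge x (v x)" by (simp add: vge_def)

lemma vge_sum3: "vge x m \<Longrightarrow> vge y m \<Longrightarrow> vge z m \<Longrightarrow> vge (x + y + z) m"
  by (intro vge_add)

lemma det: assumes "x \<noteq> 0" "v x = m" "vge y (m + 1)"
  shows "x + y \<noteq> 0" "v (x + y) = m"
proof -
  have "(x + y \<noteq> 0) \<and> v (x + y) = m"
  proof (cases "y = 0")
    case True then show ?thesis using assms by simp
  next
    case False
    then have "v x < v y" using assms by (simp add: vge_def)
    then show ?thesis using strict[of x y] assms False by simp
  qed
  then show "x + y \<noteq> 0" "v (x + y) = m" by auto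
qed

lemma vge_iff_ge: "x \<noteq> 0 \<Longrightarrow> vge x m \<longleftrightarrow> m \<le> v x"
  by (simp add: vge_def)

lemma vint_nonneg: "vge (of_nat n) 0"
proof (induction n)
  case 0 then show ?case by simp
next
  case (Suc n)
  have "vge 1 0" by (simp add: vge_def)
  then show ?case using vge_add[OF Suc.IH] by (simp add: add.commute)
qed

lemma v2_nonneg: "0 \<le> v 2"
  using vint_nonneg[of 2] by (simp add: vge_def)

lemma exists_val: "\<exists>C. C \<noteq> 0 \<and> v C = j"
proof -
  obtain p where p: "p \<noteq> 0" "v p = 1" using unif by blast
  show ?thesis
  proof (cases "0 \<le> j")
    case True
    then show ?thesis using p vpow[of p "nat j"] by (intro exI[of _ "p ^ nat j"]) auto
  next
    case False
    then show ?thesis using p vpow[of "inverse p" "nat (-j)"] vinv[of p]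
      by (intro exI[of _ "inverse p ^ nat (-j)"]) auto
  qed
qed

lemma unit_1plus: "vge z 1 \<Longrightarrow> 1 + z \<noteq> 0 \<and> v (1 + z) = 0"
  using det[of 1 0 z] by simp

end

context dv begin

lemma odd_bound:
  assumes v2: "0 < v 2" and X1: "X - 1 \<noteq> 0" and m: "v (X - 1) = m" "odd m" "0 < m" "m < 2 * v 2"
    and y: "y \<noteq> 0" and A: "y\<^sup>2 * X - 1 \<noteq> 0"
  shows "v (y\<^sup>2 * X - 1) \<le> m"
proof (rule ccontr)
  define A where "A = y\<^sup>2 * X - 1"
  assume "\<not> v (y\<^sup>2 * X - 1) \<le> m"
  then have Am: "m < v A" using A_def by simp
  have An: "A \<noteq> 0" using A A_def by simp
  have X: "X \<noteq> 0" "v X = 0" using det[of 1 0 "X - 1"] m X1 by (auto simp: vge_def)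
  have "y\<^sup>2 * X = 1 + A" using A_def by simp
  moreover have "v (1 + A) = 0" using det[of 1 0 A] An Am m by (auto simp: vge_def)
  ultimately have "v (y\<^sup>2 * X) = 0" by simp
  then have vy: "v y = 0" using X vmult[of "y\<^sup>2" X] vsq[of y] y by simp
  have eq: "y\<^sup>2 - 1 = - (y\<^sup>2 * (X - 1)) + A" using A_def by (simp add: algebra_simps)
  have v1: "v (- (y\<^sup>2 * (X - 1))) = m" using vmult[of "y\<^sup>2" "X-1"] vsq[of y] vy y X1 m by simp
  have "y\<^sup>2 * (X - 1) \<noteq> 0" using y X1 by simp
  then have nz: "y\<^sup>2 - 1 \<noteq> 0" and vm: "v (y\<^sup>2 - 1) = m"
    using det[of "- (y\<^sup>2 * (X - 1))" m A] v1 An Am eq by (auto simp: vge_def)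
  define z where "z = y - 1"
  have fac: "y\<^sup>2 - 1 = z * (z + 2)" unfolding z_def by (simp add: algebra_simps power2_eq_square)
  have zn: "z \<noteq> 0" "z + 2 \<noteq> 0" using fac nz by auto
  have vz: "v (y\<^sup>2 - 1) = v z + v (z + 2)" using fac zn vmult by simp
  have two: "(2::'a) \<noteq> 0" by simp
  show False
  proof (cases "v z < v 2")
    case True
    then have "v (z + 2) = v z" using strict[of z 2] zn two by simp
    then have "even m" using vz vm by simp
    then show False using m by simp
  next
    case False
    then have "v 2 \<le> v (z + 2)"
    proof (cases "v z = v 2")
      case True
      have "vge (z + 2) (v 2)" using True by (intro vge_add) (auto simp: vge_def)
      then show ?thesis using zn by (simp add: vge_def)
    next
      case False
      then have "v 2 < v z" using \<open>\<not> v z < v 2\<close> by simp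
      then have "v (2 + z) = v 2" using strict[of 2 z] zn two by simp
      then show ?thesis by (simp add: add.commute)
    qed
    then have "2 * v 2 \<le> m" using vz vm False by simp
    then show False using m by simp
  qed
qed

lemma sq_scale_iff:
  fixes c k :: 'a
  assumes "c \<noteq> 0"
  shows "(\<exists>d. d \<noteq> 0 \<and> c\<^sup>2 * k = d\<^sup>2) \<longleftrightarrow> (\<exists>d. d \<noteq> 0 \<and> k = d\<^sup>2)"
proof
  assume "\<exists>d. d \<noteq> 0 \<and> c\<^sup>2 * k = d\<^sup>2"
  then obtain d where d: "d \<noteq> 0" "c\<^sup>2 * k = d\<^sup>2" by blast
  then have "k = (d / c)\<^sup>2" using assms by (simp add: power_divide field_simps)
  then show "\<exists>d. d \<noteq> 0 \<and> k = d\<^sup>2" using d assms by (intro exI[of _ "d/c"]) auto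
next
  assume "\<exists>d. d \<noteq> 0 \<and> k = d\<^sup>2"
  then obtain d where d: "d \<noteq> 0" "k = d\<^sup>2" by blast
  then show "\<exists>d. d \<noteq> 0 \<and> c\<^sup>2 * k = d\<^sup>2" using assms
    by (intro exI[of _ "c * d"]) (auto simp: power_mult_distrib)
qed

lemma qdef_scale:
  fixes c k :: 'a
  assumes c: "c \<noteq> 0" and k: "k \<noteq> 0"
  shows "qdef v (c\<^sup>2 * k) = qdef v k"
proof -
  have par: "odd (v (c\<^sup>2 * k)) \<longleftrightarrow> odd (v k)" using vmult[of "c\<^sup>2" k] vsq[of c] c k by simp
  have set: "{ereal (real_of_int (v (d\<^sup>2 * (c\<^sup>2 * k) - 1))) | d. d \<noteq> 0}
           = {ereal (real_of_int (v (d\<^sup>2 * k - 1))) | d. d \<noteq> 0}"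
  proof (intro equalityI subsetI)
    fix x assume "x \<in> {ereal (real_of_int (v (d\<^sup>2 * (c\<^sup>2 * k) - 1))) | d. d \<noteq> 0}"
    then obtain d where "d \<noteq> 0" "x = ereal (real_of_int (v (d\<^sup>2 * (c\<^sup>2 * k) - 1)))" by blast
    then show "x \<in> {ereal (real_of_int (v (d\<^sup>2 * k - 1))) | d. d \<noteq> 0}" using c
      by (intro CollectI exI[of _ "d * c"]) (auto simp: power_mult_distrib mult.assoc)
  next
    fix x assume "x \<in> {ereal (real_of_int (v (d\<^sup>2 * k - 1))) | d. d \<noteq> 0}"
    then obtain d where "d \<noteq> 0" "x = ereal (real_of_int (v (d\<^sup>2 * k - 1)))" by blast
    then show "x \<in> {ereal (real_of_int (v (d\<^sup>2 * (c\<^sup>2 * k) - 1))) | d. d \<noteq> 0}" using c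
      by (intro CollectI exI[of _ "d / c"]) (auto simp: power_divide field_simps)
  qed
  show ?thesis unfolding qdef_def using sq_scale_iff[OF c, of k] par set
    by (simp only: mult.assoc[symmetric])
qed

lemma qdef_ge:
  assumes ns: "\<not> (\<exists>d. d \<noteq> 0 \<and> X = d\<^sup>2)" and ev: "even (v X)"
    and y: "y \<noteq> 0" and g: "vge (y\<^sup>2 * X - 1) m"
  shows "ereal (real_of_int m) \<le> qdef v X"
proof -
  have "y\<^sup>2 * X - 1 \<noteq> 0"
  proof
    assume "y\<^sup>2 * X - 1 = 0"
    then have "X = (inverse y)\<^sup>2" using y by (simp add: power_inverse field_simps)
    moreover have "inverse y \<noteq> 0" using y by simp
    ultimately show False using ns by blast
  qed
  then have "m \<le> v (y\<^sup>2 * X - 1)" using g by (simp add: vge_def)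
  moreover have "ereal (real_of_int (v (y\<^sup>2 * X - 1))) \<le> Sup {ereal (real_of_int (v (d\<^sup>2 * X - 1))) | d. d \<noteq> 0}"
    using y by (intro Sup_upper) blast
  moreover have "ereal (real_of_int m) \<le> ereal (real_of_int (v (y\<^sup>2 * X - 1)))"
    using calculation(1) by simp
  ultimately have "ereal (real_of_int m) \<le> Sup {ereal (real_of_int (v (d\<^sup>2 * X - 1))) | d. d \<noteq> 0}"
    by (meson order_trans)
  then show ?thesis using ns ev unfolding qdef_def by simp
qed

lemma qdef_le:
  assumes ns: "\<not> (\<exists>d. d \<noteq> 0 \<and> X = d\<^sup>2)" and ev: "even (v X)"
    and B: "\<And>y. y \<noteq> 0 \<Longrightarrow> y\<^sup>2 * X - 1 \<noteq> 0 \<Longrightarrow> v (y\<^sup>2 * X - 1) \<le> m"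
  shows "qdef v X \<le> ereal (real_of_int m)"
proof -
  have "Sup {ereal (real_of_int (v (d\<^sup>2 * X - 1))) | d. d \<noteq> 0} \<le> ereal (real_of_int m)"
  proof (rule Sup_least)
    fix x assume "x \<in> {ereal (real_of_int (v (d\<^sup>2 * X - 1))) | d. d \<noteq> 0}"
    then obtain d where d: "d \<noteq> 0" "x = ereal (real_of_int (v (d\<^sup>2 * X - 1)))" by blast
    have "d\<^sup>2 * X - 1 \<noteq> 0"
    proof
      assume "d\<^sup>2 * X - 1 = 0"
      then have "X = (inverse d)\<^sup>2" using d by (simp add: power_inverse field_simps)
      moreover have "inverse d \<noteq> 0" using d by simp
      ultimately show False using ns by blast
    qed
    then show "x \<le> ereal (real_of_int m)" using B d by simp
  qed
  then show ?thesis using ns ev unfolding qdef_def by simp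
qed

lemma qdef_odd:
  assumes v2: "0 < v 2" and ns: "\<not> (\<exists>d. d \<noteq> 0 \<and> X = d\<^sup>2)"
    and X1: "X - 1 \<noteq> 0" and m: "v (X - 1) = m" "odd m" "0 < m" "m < 2 * v 2"
  shows "qdef v X = ereal (real_of_int m)"
proof -
  have X: "X \<noteq> 0" "v X = 0" using det[of 1 0 "X - 1"] m X1 by (auto simp: vge_def)
  have "ereal (real_of_int m) \<le> qdef v X"
    using qdef_ge[OF ns, of 1 m] X m by (simp add: vge_def)
  moreover have "qdef v X \<le> ereal (real_of_int m)"
    using qdef_le[OF ns] odd_bound[OF v2 X1 m] X by simp
  ultimately show ?thesis by simp
qed

end

context dv begin

lemma vge_div_unit: "Y \<noteq> 0 \<Longrightarrow> v Y = 0 \<Longrightarrow> vge x m \<Longrightarrow> vge (x / Y) m"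
  by (cases "x = 0") (auto simp: vge_def vdiv)

lemma vge_mult_unit: "Y \<noteq> 0 \<Longrightarrow> v Y = 0 \<Longrightarrow> vge x m \<Longrightarrow> vge (Y * x) m"
  using vge_mult[of Y 0 x m] by (simp add: vge_def)

lemma vge_2: "vge 2 (v 2)" by (simp add: vge_def)

lemma cong_sq:
  assumes v2: "0 < v 2" and a: "vge a 0" and b: "vge b 0" and ab: "vge (a\<^sup>2 - b\<^sup>2) 1"
  shows "vge (a - b) 1"
proof -
  have e: "(a - b)\<^sup>2 = (a\<^sup>2 - b\<^sup>2) - 2 * b * (a - b)" by (simp add: power2_eq_square algebra_simps)
  have "vge (2 * b * (a - b)) (v 2 + 0 + 0)"
    by (intro vge_mult vge_2 b vge_diff a)
  then have "vge (2 * b * (a - b)) 1" using v2 by (auto intro: vge_mono)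
  then have "vge ((a - b)\<^sup>2) 1" using e ab by (simp add: vge_diff)
  then show ?thesis by (cases "a - b = 0") (auto simp: vge_def vsq)
qed

lemma perfect:
  assumes fr: "finite_residue_field v" and v2: "0 < v 2" and e: "\<epsilon> \<noteq> 0" "v \<epsilon> = 0"
  shows "\<exists>\<gamma>. \<gamma> \<noteq> 0 \<and> vge (\<epsilon> - \<gamma>\<^sup>2) 1"
proof -
  obtain R where R: "finite R" "\<And>x. x = 0 \<or> 0 \<le> v x \<Longrightarrow> \<exists>r\<in>R. x = r \<or> 0 < v (x - r)"
    using fr unfolding finite_residue_field_def by blast
  define R0 where "R0 = {r \<in> R. vge r 0}"
  have fin0: "finite R0" using R(1) R0_def by simp
  have cov0: "\<exists>r\<in>R0. vge (x - r) 1" if x: "vge x 0" for x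
  proof -
    obtain r where r: "r \<in> R" "x = r \<or> 0 < v (x - r)" using R(2)[of x] x by (auto simp: vge_def)
    then have g: "vge (x - r) 1" by (auto simp: vge_def)
    have "r = x - (x - r)" by simp
    then have "vge r 0" using vge_diff[OF x vge_mono[OF g, of 0]] by simp
    then show ?thesis using r g R0_def by auto
  qed
  define cov where "cov S \<longleftrightarrow> S \<subseteq> R0 \<and> (\<forall>x. vge x 0 \<longrightarrow> (\<exists>r\<in>S. vge (x - r) 1))" for S
  have "cov R0" using cov0 cov_def by auto
  then obtain S where S: "cov S" and Smin: "\<And>T. cov T \<Longrightarrow> card S \<le> card T"
    using ex_has_least_nat[of cov R0 card] by metis
  have SR: "S \<subseteq> R0" and Scov: "\<And>x. vge x 0 \<Longrightarrow> \<exists>r\<in>S. vge (x - r) 1"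
    using S unfolding cov_def by auto
  have finS: "finite S" using SR fin0 finite_subset by blast
  have Sint: "vge r 0" if "r \<in> S" for r using SR that R0_def by auto
  have pw: "r1 = r2" if r: "r1 \<in> S" "r2 \<in> S" "vge (r1 - r2) 1" for r1 r2
  proof (rule ccontr)
    assume ne: "r1 \<noteq> r2"
    have "cov (S - {r2})" unfolding cov_def
    proof (intro conjI allI impI)
      show "S - {r2} \<subseteq> R0" using SR by auto
      fix x assume "vge x 0"
      then obtain r where r': "r \<in> S" "vge (x - r) 1" using Scov by blast
      show "\<exists>r\<in>S - {r2}. vge (x - r) 1"
      proof (cases "r = r2")
        case True
        have "x - r1 = (x - r2) - (r1 - r2)" by simp
        then have "vge (x - r1) 1" using vge_diff[OF r'(2) r(3)] True by simp
        then show ?thesis using r ne by auto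
      next
        case False then show ?thesis using r' by auto
      qed
    qed
    then have "card S \<le> card (S - {r2})" using Smin by blast
    moreover have "card (S - {r2}) < card S" using finS r(2) by (meson card_Diff1_less)
    ultimately show False by simp
  qed
  define f where "f r = (SOME q. q \<in> S \<and> vge (r\<^sup>2 - q) 1)" for r
  have fS: "f r \<in> S \<and> vge (r\<^sup>2 - f r) 1" if "r \<in> S" for r
  proof -
    have "vge (r\<^sup>2) 0" using vge_mult[OF Sint[OF that] Sint[OF that]] by (simp add: power2_eq_square)
    then have "\<exists>q. q \<in> S \<and> vge (r\<^sup>2 - q) 1" using Scov by blast
    then show ?thesis unfolding f_def by (rule someI_ex)
  qed
  have inj: "inj_on f S"
  proof (rule inj_onI)
    fix r1 r2 assume r: "r1 \<in> S" "r2 \<in> S" "f r1 = f r2"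
    have "r1\<^sup>2 - r2\<^sup>2 = (r1\<^sup>2 - f r1) - (r2\<^sup>2 - f r2)" using r by simp
    moreover have "vge ((r1\<^sup>2 - f r1) - (r2\<^sup>2 - f r2)) 1"
      by (rule vge_diff) (simp_all add: fS r(1) r(2))
    ultimately have "vge (r1\<^sup>2 - r2\<^sup>2) 1" by simp
    then have "vge (r1 - r2) 1" using cong_sq v2 Sint r by blast
    then show "r1 = r2" using pw r by blast
  qed
  have img: "f ` S = S" using endo_inj_surj[OF finS _ inj] fS by blast
  have "vge \<epsilon> 0" using e by (simp add: vge_def)
  then obtain q where q: "q \<in> S" "vge (\<epsilon> - q) 1" using Scov by blast
  then obtain r0 where r0: "r0 \<in> S" "q = f r0" using img by (metis imageE)
  have "\<epsilon> - r0\<^sup>2 = (\<epsilon> - q) - (r0\<^sup>2 - f r0)" using r0 by simp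
  moreover have "vge ((\<epsilon> - q) - (r0\<^sup>2 - f r0)) 1"
    using vge_diff[OF q(2) conjunct2[OF fS[OF r0(1)]]] .
  ultimately have g: "vge (\<epsilon> - r0\<^sup>2) 1" by simp
  have "r0 \<noteq> 0"
  proof
    assume "r0 = 0" then have "vge \<epsilon> 1" using g by simp
    then show False using e by (simp add: vge_def)
  qed
  then show ?thesis using g by blast
qed

lemma unit_sq_approx:
  assumes "\<gamma> \<noteq> 0" "vge (\<epsilon> - \<gamma>\<^sup>2) 1" "\<epsilon> \<noteq> 0" "v \<epsilon> = 0"
  shows "v \<gamma> = 0"
proof -
  have "\<gamma>\<^sup>2 = \<epsilon> + (\<gamma>\<^sup>2 - \<epsilon>)" by simp
  moreover have "vge (\<gamma>\<^sup>2 - \<epsilon>) (0 + 1)" using assms(2) vge_minus[of "\<epsilon> - \<gamma>\<^sup>2" 1] by simp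
  ultimately have "v (\<gamma>\<^sup>2) = 0" using det[of \<epsilon> 0 "\<gamma>\<^sup>2 - \<epsilon>"] assms by simp
  then show ?thesis using vsq assms by simp
qed

definition good :: "'a \<Rightarrow> bool" where
  "good u \<longleftrightarrow> u \<noteq> 0 \<and> odd (v u) \<and> 0 < v u \<and> v u < 2 * v 2"

lemma normalize:
  assumes fr: "finite_residue_field v" and v2: "0 < v 2" and k: "k \<noteq> 0" "even (v k)"
  shows "\<exists>C. C \<noteq> 0 \<and> (vge (C\<^sup>2 * k - 1) (2 * v 2) \<or> good (C\<^sup>2 * k - 1))"
proof -
  obtain p where p: "p \<noteq> 0" "v p = 1" using unif by blast
  obtain C0 where C0: "C0 \<noteq> 0" "v C0 = - (v k div 2)" using exists_val by blast
  define X0 where "X0 = C0\<^sup>2 * k"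
  have X0: "X0 \<noteq> 0" "v X0 = 0" using C0 k X0_def vmult[of "C0\<^sup>2" k] vsq[of C0] by auto
  obtain \<gamma> where g: "\<gamma> \<noteq> 0" "vge (X0 - \<gamma>\<^sup>2) 1" using perfect[OF fr v2 X0] by blast
  have vg: "v \<gamma> = 0" using unit_sq_approx g X0 by blast
  define C1 where "C1 = C0 / \<gamma>"
  have C1: "C1 \<noteq> 0" using C1_def C0 g by simp
  have "C1\<^sup>2 * k - 1 = (X0 - \<gamma>\<^sup>2) / \<gamma>\<^sup>2" using g(1) unfolding C1_def X0_def
    by (simp add: power_divide field_simps)
  then have start: "vge (C1\<^sup>2 * k - 1) 1" using vge_div_unit[OF _ _ g(2), of "\<gamma>\<^sup>2"] g vg vsq by simp
  have step: "\<exists>C. C \<noteq> 0 \<and> (vge (C\<^sup>2 * k - 1) (int j + 1) \<or> good (C\<^sup>2 * k - 1))"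
    if "int j + 1 \<le> 2 * v 2" for j
    using that
  proof (induction j)
    case 0 then show ?case using start C1 by auto
  next
    case (Suc j)
    define m where "m = int j + 1"
    have m: "m < 2 * v 2" "1 \<le> m" using Suc.prems m_def by auto
    obtain C where C: "C \<noteq> 0" "vge (C\<^sup>2 * k - 1) m \<or> good (C\<^sup>2 * k - 1)"
      using Suc.IH Suc.prems m_def by fastforce
    define u where "u = C\<^sup>2 * k - 1"
    show ?case
    proof (cases "good u \<or> vge u (m + 1)")
      case True then show ?thesis using C u_def m_def by (auto simp: add.commute)
    next
      case False
      then have un: "u \<noteq> 0" and vu: "v u = m" using C u_def by (auto simp: vge_def)
      have "even m" using False un vu m unfolding good_def by auto
      then obtain h where h: "m = 2 * h" by (metis evenE)
      have h1: "1 \<le> h" using h m by simp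
      define \<epsilon> where "\<epsilon> = u / p ^ nat m"
      have pm: "p ^ nat m \<noteq> 0" "v (p ^ nat m) = m" using p vpow[of p "nat m"] m by auto
      have e: "\<epsilon> \<noteq> 0" "v \<epsilon> = 0" using un pm vu \<epsilon>_def vdiv by auto
      obtain \<gamma> where g: "\<gamma> \<noteq> 0" "vge (\<epsilon> - \<gamma>\<^sup>2) 1" using perfect[OF fr v2 e] by blast
      have vg: "v \<gamma> = 0" using unit_sq_approx g e by blast
      define z where "z = p ^ nat h * \<gamma>"
      have vz: "z \<noteq> 0" "v z = h" using z_def p g vg vpow[of p "nat h"] vmult h1 by auto
      have z2: "z\<^sup>2 = p ^ nat m * \<gamma>\<^sup>2" unfolding z_def using h h1
        by (simp add: power_mult_distrib power_mult[symmetric] nat_mult_distrib mult.commute)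
      have a1: "vge (u - z\<^sup>2) (m + 1)"
      proof -
        have "u - z\<^sup>2 = p ^ nat m * (\<epsilon> - \<gamma>\<^sup>2)" using z2 \<epsilon>_def pm by (simp add: field_simps)
        then show ?thesis using vge_mult[OF vge_val[of "p ^ nat m"] g(2)] pm by simp
      qed
      have a2: "vge (2 * z) (m + 1)"
      proof -
        have "vge (2 * z) (v 2 + h)" using vge_mult[OF vge_2 vge_val[of z]] vz by simp
        moreover have "m + 1 \<le> v 2 + h" using h m by simp
        ultimately show ?thesis by (rule vge_mono)
      qed
      define Y where "Y = 1 + z"
      have Y: "Y \<noteq> 0" "v Y = 0" using unit_1plus[of z] vz h1 Y_def by (auto simp: vge_def)
      define C' where "C' = C / Y"
      have "C'\<^sup>2 * k - 1 = (C\<^sup>2 * k - Y\<^sup>2) / Y\<^sup>2" unfolding C'_def using Y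
        by (simp add: power_divide field_simps)
      moreover have "C\<^sup>2 * k - Y\<^sup>2 = u - z\<^sup>2 - 2 * z" unfolding u_def Y_def
        by (simp add: power2_eq_square algebra_simps)
      ultimately have "C'\<^sup>2 * k - 1 = (u - z\<^sup>2 - 2 * z) / Y\<^sup>2" by simp
      moreover have "vge (u - z\<^sup>2 - 2 * z) (m + 1)" using a1 a2 by (rule vge_diff)
      ultimately have "vge (C'\<^sup>2 * k - 1) (m + 1)"
        using vge_div_unit[of "Y\<^sup>2"] Y vsq by simp
      moreover have "C' \<noteq> 0" using C Y C'_def by simp
      ultimately show ?thesis using m_def by (auto simp: add.commute)
    qed
  qed
  define j where "j = nat (2 * v 2 - 1)"
  have j: "int j + 1 = 2 * v 2" using v2 j_def by simp
  obtain C where "C \<noteq> 0" "vge (C\<^sup>2 * k - 1) (int j + 1) \<or> good (C\<^sup>2 * k - 1)"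
    using step[of j] j by auto
  then show ?thesis using j by auto
qed

end


lemma pow_even: "0 \<le> (h::int) \<Longrightarrow> (p::'a::comm_ring_1) ^ nat (2*h) = (p^nat h)\<^sup>2"
proof -
  assume "0 \<le> h"
  then have "nat (2*h) = 2 * nat h" by simp
  then show ?thesis by (simp add: power_even_eq)
qed

lemma pow_odd: "0 \<le> (h::int) \<Longrightarrow> (p::'a::comm_ring_1) ^ nat (2*h+1) = p * (p^nat h)\<^sup>2"
proof -
  assume "0 \<le> h"
  then have "nat (2*h+1) = Suc (2 * nat h)" by simp
  then show ?thesis by (simp add: power_even_eq)
qed
context dv begin

lemma iter:
  assumes fr: "finite_residue_field v" and v2: "0 < v 2"
    and p: "p \<noteq> 0" "v p = 1"
    and u: "u \<noteq> 0" "v u = 2 * k + 1" and k0: "0 \<le> k" and kv: "k < v 2"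
    and T: "T \<le> v 2 + k + 1"
  shows "\<exists>a c. a \<noteq> 0 \<and> v a = k \<and> vge c 1 \<and> vge (u - 2 * c - c\<^sup>2 + p * a\<^sup>2) T"
proof -
  define d where "d = 2 * k + 1"
  have pw: "p ^ nat j \<noteq> 0 \<and> v (p ^ nat j) = j" if "0 \<le> j" for j
    using p vpow[of p "nat j"] that by auto
  have start: "\<exists>a. a \<noteq> 0 \<and> v a = k \<and> vge (u + p * a\<^sup>2) (d + 1)"
  proof -
    define \<epsilon> where "\<epsilon> = u / p ^ nat d"
    have pd: "p ^ nat d \<noteq> 0" "v (p ^ nat d) = d" using pw[of d] k0 d_def by auto
    have e: "- \<epsilon> \<noteq> 0" "v (- \<epsilon>) = 0" using u pd \<epsilon>_def vdiv d_def by auto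
    obtain \<gamma> where g: "\<gamma> \<noteq> 0" "vge (- \<epsilon> - \<gamma>\<^sup>2) 1" using perfect[OF fr v2 e] by blast
    have vg: "v \<gamma> = 0" using unit_sq_approx g e by blast
    define a where "a = p ^ nat k * \<gamma>"
    have a: "a \<noteq> 0" "v a = k" using a_def pw[of k] k0 g vg vmult by auto
    have "u + p * a\<^sup>2 = - (p ^ nat d * (- \<epsilon> - \<gamma>\<^sup>2))"
    proof -
      have "p * a\<^sup>2 = p ^ nat d * \<gamma>\<^sup>2" unfolding a_def d_def using pow_odd[OF k0, of p]
        by (simp add: power_mult_distrib mult.assoc)
      moreover have "u = p ^ nat d * \<epsilon>" using \<epsilon>_def pd by simp
      ultimately show ?thesis by (simp add: algebra_simps)
    qed
    moreover have "vge (p ^ nat d * (- \<epsilon> - \<gamma>\<^sup>2)) (d + 1)"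
      using vge_mult[OF vge_val[of "p ^ nat d"] g(2)] pd by simp
    ultimately show ?thesis using a by auto
  qed
  have main: "\<exists>a c. a \<noteq> 0 \<and> v a = k \<and> vge c 1 \<and> vge (u - 2 * c - c\<^sup>2 + p * a\<^sup>2) (d + 1 + int j)"
    if "d + 1 + int j \<le> v 2 + k + 1" for j
    using that
  proof (induction j)
    case 0
    obtain a where "a \<noteq> 0 \<and> v a = k \<and> vge (u + p * a\<^sup>2) (d + 1)" using start by blast
    then have "a \<noteq> 0 \<and> v a = k \<and> vge 0 1 \<and> vge (u - 2 * 0 - 0\<^sup>2 + p * a\<^sup>2) (d + 1 + int 0)" by simp
    then show ?case by blast
  next
    case (Suc j)
    define m where "m = d + 1 + int j"
    have "d + 1 + int j \<le> v 2 + k + 1" using Suc.prems by simp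
    then obtain a c where ac: "a \<noteq> 0" "v a = k" "vge c 1" "vge (u - 2 * c - c\<^sup>2 + p * a\<^sup>2) m"
      using Suc.IH m_def by blast
    have mb: "m + 1 \<le> v 2 + k + 1" "d + 1 \<le> m" using Suc.prems m_def by auto
    define P where "P = u - 2 * c - c\<^sup>2 + p * a\<^sup>2"
    have goal: "d + 1 + int (Suc j) = m + 1" using m_def by simp
    show ?case
    proof (cases "vge P (m + 1)")
      case True
      then have "vge (u - 2 * c - c\<^sup>2 + p * a\<^sup>2) (d + 1 + int (Suc j))"
        unfolding goal P_def .
      then have "a \<noteq> 0 \<and> v a = k \<and> vge c 1 \<and> vge (u - 2 * c - c\<^sup>2 + p * a\<^sup>2) (d + 1 + int (Suc j))"
        using ac by simp
      then show ?thesis by blast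
    next
      case False
      then have Pn: "P \<noteq> 0" and vP: "v P = m" using ac P_def by (auto simp: vge_def)
      define \<epsilon> where "\<epsilon> = P / p ^ nat m"
      have pm: "p ^ nat m \<noteq> 0" "v (p ^ nat m) = m" using pw[of m] mb k0 d_def by auto
      have e: "\<epsilon> \<noteq> 0" "v \<epsilon> = 0" using Pn pm vP \<epsilon>_def vdiv by auto
      have Pe: "P = p ^ nat m * \<epsilon>" using \<epsilon>_def pm by simp
      show ?thesis
      proof (cases "even m")
        case True
        then obtain h where h: "m = 2 * h" by (metis evenE)
        have h1: "1 \<le> h" "0 \<le> h" using h mb d_def k0 by auto
        obtain \<gamma> where g: "\<gamma> \<noteq> 0" "vge (\<epsilon> - \<gamma>\<^sup>2) 1" using perfect[OF fr v2 e] by blast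
        have vg: "v \<gamma> = 0" using unit_sq_approx g e by blast
        define c' where "c' = p ^ nat h * \<gamma>"
        have c': "c' \<noteq> 0" "v c' = h" using c'_def pw[of h] h1 g vg vmult by auto
        have c'2: "c'\<^sup>2 = p ^ nat m * \<gamma>\<^sup>2" unfolding c'_def using h pow_even[OF h1(2), of p]
          by (simp add: power_mult_distrib)
        have e1: "u - 2 * (c + c') - (c + c')\<^sup>2 + p * a\<^sup>2 = (P - c'\<^sup>2) - 2 * c' * (1 + c)"
          unfolding P_def by (simp add: power2_eq_square algebra_simps)
        have e2: "P - c'\<^sup>2 = p ^ nat m * (\<epsilon> - \<gamma>\<^sup>2)" using Pe c'2 by (simp add: right_diff_distrib)
        have eq: "u - 2 * (c + c') - (c + c')\<^sup>2 + p * a\<^sup>2 = p ^ nat m * (\<epsilon> - \<gamma>\<^sup>2) - 2 * c' * (1 + c)"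
          using e1 e2 by simp
        have t1: "vge (p ^ nat m * (\<epsilon> - \<gamma>\<^sup>2)) (m + 1)"
          using vge_mult[OF vge_val[of "p ^ nat m"] g(2)] pm by simp
        have "vge (2 * c' * (1 + c)) (v 2 + h + 0)"
        proof (intro vge_mult vge_2)
          show "vge c' h" using c' by (simp add: vge_def)
          show "vge (1 + c) 0" using unit_1plus[OF ac(3)] by (simp add: vge_def)
        qed
        moreover have "m + 1 \<le> v 2 + h + 0" using h mb d_def k0 by simp
        ultimately have t2: "vge (2 * c' * (1 + c)) (m + 1)" by (rule vge_mono)
        have "vge (c + c') 1" using ac(3) c' h1 by (intro vge_add) (auto simp: vge_def)
        then show ?thesis using eq vge_diff[OF t1 t2] ac goal
          by (intro exI[of _ a] exI[of _ "c + c'"]) auto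
      next
        case False
        then obtain h where h: "m = 2 * h + 1" by (metis oddE)
        have hk: "k < h" using h mb d_def by simp
        have me: "- \<epsilon> \<noteq> 0" "v (- \<epsilon>) = 0" using e by auto
        obtain \<gamma> where g: "\<gamma> \<noteq> 0" "vge (- \<epsilon> - \<gamma>\<^sup>2) 1" using perfect[OF fr v2 me] by blast
        have vg: "v \<gamma> = 0" using unit_sq_approx g me by blast
        define a' where "a' = p ^ nat h * \<gamma>"
        have a': "a' \<noteq> 0" "v a' = h" using a'_def pw[of h] hk k0 g vg vmult by auto
        have h0: "0 \<le> h" using hk k0 by simp
        have pa'2: "p * a'\<^sup>2 = p ^ nat m * \<gamma>\<^sup>2" unfolding a'_def using h pow_odd[OF h0, of p]
          by (simp add: power_mult_distrib mult.assoc)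
        have e1: "u - 2 * c - c\<^sup>2 + p * (a + a')\<^sup>2 = (P + p * a'\<^sup>2) + 2 * p * a * a'"
          unfolding P_def by (simp add: power2_eq_square algebra_simps)
        have e2: "P + p * a'\<^sup>2 = - (p ^ nat m * (- \<epsilon> - \<gamma>\<^sup>2))" using Pe pa'2
          by (simp add: algebra_simps)
        have eq: "u - 2 * c - c\<^sup>2 + p * (a + a')\<^sup>2 = - (p ^ nat m * (- \<epsilon> - \<gamma>\<^sup>2)) + 2 * p * a * a'"
          using e1 e2 by simp
        have t1: "vge (p ^ nat m * (- \<epsilon> - \<gamma>\<^sup>2)) (m + 1)"
          using vge_mult[OF vge_val[of "p ^ nat m"] g(2)] pm by simp
        have "vge (2 * p * a * a') (v 2 + 1 + k + h)"
          using ac a' p by (intro vge_mult vge_2) (auto simp: vge_def)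
        moreover have "m + 1 \<le> v 2 + 1 + k + h" using h mb d_def k0 by simp
        ultimately have t2: "vge (2 * p * a * a') (m + 1)" by (rule vge_mono)
        have "a + a' \<noteq> 0 \<and> v (a + a') = k"
          using det[of a k a'] ac a' hk by (auto simp: vge_def)
        then show ?thesis using eq vge_add[OF _ t2, of "- (p ^ nat m * (- \<epsilon> - \<gamma>\<^sup>2))"] t1 ac goal
          by (intro exI[of _ "a + a'"] exI[of _ c]) auto
      qed
    qed
  qed
  show ?thesis
  proof (cases "T \<le> d + 1")
    case True
    have "d + 1 + int 0 \<le> v 2 + k + 1" using d_def v2 k0 kv by simp
    then obtain a c where "a \<noteq> 0 \<and> v a = k \<and> vge c 1 \<and> vge (u - 2 * c - c\<^sup>2 + p * a\<^sup>2) (d + 1 + int 0)"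
      using main[of 0] by blast
    then show ?thesis using True vge_mono[of _ "d + 1 + int 0" T] by auto
  next
    case False
    define j where "j = nat (T - d - 1)"
    have "T = d + 1 + int j" using False j_def by simp
    then show ?thesis using main[of j] T d_def by auto
  qed
qed

end

context dv begin

lemma hensel:
  assumes vc: "val_complete v" and v2: "0 < v 2" and g: "vge (X - 1) (2 * v 2 + 1)"
  shows "\<exists>y. y \<noteq> 0 \<and> X = y\<^sup>2"
proof -
  have "v (2 * 2) = v 2 + v 2" by (rule vmult) simp_all
  then have v4: "v 4 = 2 * v 2" by simp
  define \<rho> where "\<rho> = (X - 1) / 4"
  have r1: "vge \<rho> 1"
  proof (cases "X - 1 = 0")
    case True then show ?thesis by (simp add: \<rho>_def)
  next
    case False
    then have "v \<rho> = v (X - 1) - 2 * v 2" unfolding \<rho>_def using vdiv[of "X - 1" 4] v4 by simp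
    then show ?thesis using g False by (simp add: vge_def)
  qed
  define h :: "nat \<Rightarrow> 'a" where "h n = ((\<lambda>x. \<rho> - x\<^sup>2) ^^ n) 0" for n
  have h0: "h 0 = 0" and hS: "h (Suc n) = \<rho> - (h n)\<^sup>2" for n by (simp_all add: h_def)
  have H1: "vge (h n) 1" for n
  proof (induction n)
    case 0 then show ?case by (simp add: h0)
  next
    case (Suc n)
    have "vge ((h n)\<^sup>2) (1 + 1)" using vge_mult[OF Suc Suc] by (simp add: power2_eq_square)
    then have "vge ((h n)\<^sup>2) 1" by (rule vge_mono) simp
    then show ?case unfolding hS using r1 by (intro vge_diff)
  qed
  have H2: "vge (h (Suc n) - h n) (int n + 1)" for n
  proof (induction n)
    case 0 then show ?case using r1 by (simp add: hS h0)
  next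
    case (Suc n)
    have e: "h (Suc (Suc n)) - h (Suc n) = - ((h (Suc n) - h n) * (h (Suc n) + h n))"
      by (simp add: hS power2_eq_square algebra_simps)
    have "vge (h (Suc n) + h n) 1" using H1[of "Suc n"] H1[of n] by (rule vge_add)
    then have "vge ((h (Suc n) - h n) * (h (Suc n) + h n)) (int n + 1 + 1)"
      using vge_mult[OF Suc.IH] by blast
    then show ?case using e by simp
  qed
  have H3: "vge (h n - h M) (int M + 1)" if "M \<le> n" for M n
    using that
  proof (induction n rule: dec_induct)
    case base then show ?case by simp
  next
    case (step n)
    have "h (Suc n) - h M = (h (Suc n) - h n) + (h n - h M)" by simp
    moreover have "vge (h (Suc n) - h n) (int M + 1)"
      using vge_mono[OF H2[of n], of "int M + 1"] step(1) by simp
    ultimately show ?case using vge_add[OF _ step(3)] by metis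
  qed
  have cauchy: "\<forall>N::int. \<exists>M. \<forall>m\<ge>M. \<forall>n\<ge>M. h m = h n \<or> N \<le> v (h m - h n)"
  proof
    fix N :: int
    show "\<exists>M. \<forall>m\<ge>M. \<forall>n\<ge>M. h m = h n \<or> N \<le> v (h m - h n)"
    proof (intro exI allI impI)
      fix m n assume mn: "nat N \<le> m" "nat N \<le> n"
      have "h m - h n = (h m - h (nat N)) - (h n - h (nat N))" by simp
      moreover have "vge ((h m - h (nat N)) - (h n - h (nat N))) (int (nat N) + 1)"
        using H3[OF mn(1)] H3[OF mn(2)] by (rule vge_diff)
      ultimately have "vge (h m - h n) (int (nat N) + 1)" by simp
      then have "vge (h m - h n) N" by (rule vge_mono) simp
      then show "h m = h n \<or> N \<le> v (h m - h n)" by (auto simp: vge_def)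
    qed
  qed
  have vc': "\<exists>L. \<forall>N::int. \<exists>M. \<forall>n\<ge>M. Z n = L \<or> N \<le> v (Z n - L)"
    if "\<forall>N::int. \<exists>M. \<forall>m\<ge>M. \<forall>n\<ge>M. Z m = Z n \<or> N \<le> v (Z m - Z n)" for Z :: "nat \<Rightarrow> 'a"
    using vc that unfolding val_complete_def by (elim allE[of _ Z]) (erule mp)
  obtain L where L0: "\<forall>N::int. \<exists>M. \<forall>n\<ge>M. h n = L \<or> N \<le> v (h n - L)"
    using vc'[OF cauchy] by (elim exE)
  have L: "\<exists>M. \<forall>n\<ge>M. h n = L \<or> N \<le> v (h n - L)" for N :: int using L0 by (rule spec)
  have Leq: "L\<^sup>2 + L = \<rho>"
  proof (rule ccontr)
    define D where "D = L\<^sup>2 + L - \<rho>"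
    assume "L\<^sup>2 + L \<noteq> \<rho>"
    then have Dn: "D \<noteq> 0" using D_def by simp
    define N where "N = max (v D + 1) 1"
    obtain M where M: "\<forall>n\<ge>M. h n = L \<or> N \<le> v (h n - L)" using L by blast
    have a: "vge (L - h n) N" if "M \<le> n" for n
      using M that vge_minus[of "h n - L" N] by (auto simp: vge_def)
    have eD: "D = (L - h (Suc M)) + (L - h M) * (L + h M)"
      unfolding D_def hS by (simp add: power2_eq_square algebra_simps)
    have "vge (L + h M) 0"
    proof -
      have "L + h M = (L - h M) + 2 * h M" by simp
      moreover have "vge ((L - h M) + 2 * h M) 0"
      proof (intro vge_add)
        show "vge (L - h M) 0" using vge_mono[OF a[of M], of 0] N_def by simp
        have "vge (2 * h M) (v 2 + 1)" using H1 by (intro vge_mult vge_2)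
        then show "vge (2 * h M) 0" by (rule vge_mono) (use v2 in simp)
      qed
      ultimately show ?thesis by metis
    qed
    then have "vge ((L - h M) * (L + h M)) (N + 0)" using vge_mult[OF a[of M]] by blast
    then have "vge ((L - h (Suc M)) + (L - h M) * (L + h M)) N"
      using a[of "Suc M"] by (intro vge_add) auto
    then have "vge D N" using eD by simp
    then show False using Dn N_def by (simp add: vge_def)
  qed
  define y where "y = 1 + 2 * L"
  have "y\<^sup>2 = 1 + 4 * (L\<^sup>2 + L)" unfolding y_def by (simp add: power2_eq_square algebra_simps)
  also have "\<dots> = 1 + 4 * \<rho>" using Leq by simp
  also have "\<dots> = X" unfolding \<rho>_def by (simp add: field_simps)
  finally have yX: "y\<^sup>2 = X" .
  have "y \<noteq> 0"
  proof
    assume "y = 0"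
    then have "X - 1 = -1" using yX by simp
    then show False using g v2 by (simp add: vge_def)
  qed
  then show ?thesis using yX by auto
qed

end


locale qext =
  fixes vF :: "'f::field_char_0 \<Rightarrow> int" and vE :: "'e::field_char_0 \<Rightarrow> int"
    and i :: "'f \<Rightarrow> 'e" and s :: "'e \<Rightarrow> 'e" and \<pi> :: 'e and b :: int
  assumes hF: "local_field_over_Q2 vF"
    and hE: "local_field_over_Q2 vE"
    and emb: "field_emb i"
    and quad: "quadratic_over i"
    and ram: "\<And>x. x \<noteq> 0 \<Longrightarrow> vE (i x) = 2 * vF x"
    and s_add: "\<And>x y. s (x + y) = s x + s y"
    and s_mult: "\<And>x y. s (x * y) = s x * s y"
    and s_fix: "\<And>x. s (i x) = i x"
    and s_nontriv: "s \<noteq> id"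
    and unifE: "vE \<pi> = 1" and pi_nz: "\<pi> \<noteq> 0"
    and b_def: "b = vE (s \<pi> - \<pi>) - 1"
    and b_odd: "odd b"
begin

sublocale F: dv vF using hF unfolding local_field_over_Q2_def by unfold_locales blast
sublocale E: dv vE using hE unfolding local_field_over_Q2_def by unfold_locales blast

lemma i_add[simp]: "i (x + y) = i x + i y" using emb unfolding field_emb_def by blast
lemma i_mult[simp]: "i (x * y) = i x * i y" using emb unfolding field_emb_def by blast
lemma i_1[simp]: "i 1 = 1" using emb unfolding field_emb_def by blast
lemma i_0[simp]: "i 0 = 0" using i_add[of 0 0] by simp
lemma i_minus[simp]: "i (- x) = - i x"
proof -
  have "i x + i (- x) = 0" using i_add[of x "- x"] by simp
  then show ?thesis by (metis neg_eq_iff_add_eq_0)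
qed
lemma i_diff[simp]: "i (x - y) = i x - i y" using i_add[of x "- y"] by simp
lemma i_pow[simp]: "i (x ^ n) = (i x) ^ n" by (induction n) auto
lemma i_2[simp]: "i 2 = 2"
proof -
  have "i (1 + 1) = 1 + 1" by (subst i_add) simp
  then show ?thesis by simp
qed
lemma i_nz: "x \<noteq> 0 \<Longrightarrow> i x \<noteq> 0"
  using i_mult[of x "inverse x"] by auto
lemma i_eq0[simp]: "i x = 0 \<longleftrightarrow> x = 0" using i_nz by auto

lemma vEi: "x \<noteq> 0 \<Longrightarrow> vE (i x) = 2 * vF x" by (rule ram)

lemma vge_i: "F.vge x m \<Longrightarrow> E.vge (i x) (2 * m)"
  by (cases "x = 0") (auto simp: F.vge_def E.vge_def vEi)

lemma vE2: "vE 2 = 2 * vF 2" using vEi[of 2] by simp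

lemma e_pos: "0 < vF 2" using hF unfolding local_field_over_Q2_def by blast

lemma i_div[simp]: "i (x / y) = i x / i y"
proof (cases "y = 0")
  case True then show ?thesis by simp
next
  case False
  have "i (x / y) * i y = i x" using False by (simp flip: i_mult)
  then show ?thesis using False by (simp add: field_simps)
qed

lemma basis: "\<exists>\<alpha> \<beta>. z = i \<alpha> + i \<beta> * \<pi>"
proof -
  obtain t0 where t0: "\<And>z. \<exists>!ab. z = i (fst ab) + i (snd ab) * t0"
    using quad unfolding quadratic_over_def by blast
  obtain a0 b0 where ab0: "\<pi> = i a0 + i b0 * t0" using t0[of \<pi>] by auto
  have b0: "b0 \<noteq> 0"
  proof
    assume "b0 = 0"
    then have "\<pi> = i a0" using ab0 by simp
    moreover have "a0 \<noteq> 0" using pi_nz calculation by auto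
    ultimately have "vE \<pi> = 2 * vF a0" using vEi by simp
    then show False using unifE by presburger
  qed
  obtain a1 b1 where ab1: "z = i a1 + i b1 * t0" using t0[of z] by auto
  have "t0 = (\<pi> - i a0) / i b0" using ab0 b0 by (simp add: field_simps)
  then have "z = i a1 + i b1 * ((\<pi> - i a0) / i b0)" using ab1 by simp
  also have "\<dots> = i (a1 - b1 * a0 / b0) + i (b1 / b0) * \<pi>"
    using b0 i_nz[OF b0] by (simp add: field_simps)
  finally have "z = i (a1 - b1 * a0 / b0) + i (b1 / b0) * \<pi>" .
  then show ?thesis by blast
qed

lemma s_0: "s 0 = 0" using s_add[of 0 0] by simp
lemma s_lin: "s (i \<alpha> + i \<beta> * \<pi>) = i \<alpha> + i \<beta> * s \<pi>" by (simp add: s_add s_mult s_fix)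

lemma ext_struct:
  "\<exists>t n. \<pi>\<^sup>2 = i t * \<pi> - i n \<and> s \<pi> = i t - \<pi>"
proof -
  obtain p0 p1 where p: "\<pi>\<^sup>2 = i p0 + i p1 * \<pi>" using basis[of "\<pi>\<^sup>2"] by blast
  have sp: "(s \<pi>)\<^sup>2 = i p0 + i p1 * s \<pi>"
    using arg_cong[OF p, of s] by (simp add: s_lin power2_eq_square s_mult)
  have "(s \<pi> - \<pi>) * (s \<pi> - (i p1 - \<pi>)) = 0"
  proof -
    have "(s \<pi> - \<pi>) * (s \<pi> - (i p1 - \<pi>)) = (s \<pi>)\<^sup>2 - i p1 * s \<pi> - (\<pi>\<^sup>2 - i p1 * \<pi>)"
      by (simp add: power2_eq_square algebra_simps)
    then show ?thesis using p sp by simp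
  qed
  moreover have "s \<pi> \<noteq> \<pi>"
  proof
    assume h: "s \<pi> = \<pi>"
    have "s z = z" for z
    proof -
      obtain \<alpha> \<beta> where "z = i \<alpha> + i \<beta> * \<pi>" using basis by blast
      then show ?thesis using h s_lin by simp
    qed
    then have "s = id" by auto
    then show False using s_nontriv by simp
  qed
  ultimately have "s \<pi> = i p1 - \<pi>" by simp
  moreover have "\<pi>\<^sup>2 = i p1 * \<pi> - i (- p0)" using p by simp
  ultimately show ?thesis by blast
qed

end


locale qext2 = qext +
  fixes t n
  assumes pi2: "\<pi>\<^sup>2 = i t * \<pi> - i n" and spi: "s \<pi> = i t - \<pi>"
begin

lemma v2pi: "2 * \<pi> \<noteq> 0" "vE (2 * \<pi>) = 2 * vF 2 + 1"
  using E.vmult[of 2 \<pi>] pi_nz vE2 unifE by auto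

lemma bfacts: "t \<noteq> 0 \<and> 2 * vF t = b + 1 \<and> b < 2 * vF 2"
proof -
  have bb: "b + 1 = vE (i t - 2 * \<pi>)" using b_def spi by simp
  show ?thesis
  proof (cases "t = 0")
    case True
    then have "b + 1 = 2 * vF 2 + 1" using bb v2pi by simp
    then show ?thesis using b_odd by presburger
  next
    case False
    have vt: "vE (i t) = 2 * vF t" using vEi False by simp
    have nz: "i t \<noteq> 0" using False by simp
    have "2 * vF t \<noteq> 2 * vF 2 + 1" by presburger
    then consider "2 * vF t < 2 * vF 2 + 1" | "2 * vF 2 + 1 < 2 * vF t" by linarith
    then show ?thesis
    proof cases
      case 1
      then have "vE (i t + - (2 * \<pi>)) = 2 * vF t"
        using E.strict[of "i t" "- (2 * \<pi>)"] vt nz v2pi by simp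
      then show ?thesis using bb False 1 by simp
    next
      case 2
      then have "vE (- (2 * \<pi>) + i t) = 2 * vF 2 + 1"
        using E.strict[of "- (2 * \<pi>)" "i t"] vt nz v2pi by simp
      then have "b + 1 = 2 * vF 2 + 1" using bb by (simp add: add.commute)
      then show ?thesis using b_odd by presburger
    qed
  qed
qed

lemma nfacts: "n \<noteq> 0 \<and> vF n = 1 \<and> 1 \<le> b"
proof -
  have t: "t \<noteq> 0" "2 * vF t = b + 1" using bfacts by auto
  have vt: "vE (i t) = 2 * vF t" using vEi t by simp
  have ineq: "i n = \<pi> * (i t - \<pi>)" using pi2 by (simp add: power2_eq_square algebra_simps)
  have d0: "i t - \<pi> \<noteq> 0"
  proof
    assume "i t - \<pi> = 0" then have "\<pi> = i t" by simp
    then have "vE \<pi> = 2 * vF t" using vt by simp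
    then show False using unifE by presburger
  qed
  then have nn: "n \<noteq> 0" using ineq pi_nz by auto
  have vn: "vE (i n) = 2 * vF n" using vEi nn by simp
  have vprod: "vE (i n) = 1 + vE (i t - \<pi>)" using ineq E.vmult[OF pi_nz d0] unifE by simp
  have "1 < 2 * vF t"
  proof (rule ccontr)
    assume "\<not> 1 < 2 * vF t"
    then have "2 * vF t < 1" by presburger
    then have "vE (i t + - \<pi>) = 2 * vF t" using E.strict[of "i t" "- \<pi>"] vt unifE pi_nz t by simp
    then have "vE (i n) = 1 + 2 * vF t" using vprod by simp
    then show False using vn by presburger
  qed
  then have "vE (- \<pi> + i t) = 1" using E.strict[of "- \<pi>" "i t"] vt unifE pi_nz t by simp
  then have "vE (i n) = 2" using vprod by (simp add: add.commute)
  then show ?thesis using vn nn t \<open>1 < 2 * vF t\<close> by auto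
qed

end

context qext2 begin

lemma fr_F: "finite_residue_field vF" using hF unfolding local_field_over_Q2_def by blast
lemma vc_E: "val_complete vE" using hE unfolding local_field_over_Q2_def by blast
lemma fr_E: "finite_residue_field vE" using hE unfolding local_field_over_Q2_def by blast

lemma constr:
  assumes u: "u \<noteq> 0" "vF u = 2*k+1" and k0: "0 \<le> k" and ke: "k < vF 2"
  shows "\<exists>Y. Y \<noteq> 0 \<and> E.vge (Y\<^sup>2 * i (1+u) - 1) (min (2*(2*k+1) + b) ((2*k+1) + 2 * vF 2))
     \<and> (2*k+1 + b \<noteq> 2 * vF 2 \<longrightarrow> Y\<^sup>2 * i (1+u) - 1 \<noteq> 0
          \<and> vE (Y\<^sup>2 * i (1+u) - 1) = min (2*(2*k+1) + b) ((2*k+1) + 2 * vF 2))"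
proof -
  define e where "e = vF 2"
  define tgt where "tgt = min (2*(2*k+1) + b) ((2*k+1) + 2 * e)"
  have tf: "t \<noteq> 0" "2 * vF t = b + 1" "b < 2 * e" using bfacts e_def by auto
  have nf: "n \<noteq> 0" "vF n = 1" "1 \<le> b" using nfacts by auto
  obtain \<beta>0 where hb: "b + 1 = 2 * \<beta>0" using b_odd by (metis odd_iff_mod_2_eq_one oddE add.commute
       add_diff_cancel_left' even_plus_one_iff evenE)
  have vt: "vF t = \<beta>0" using tf hb by simp
  define d where "d = 2 * k + 1"
  define T where "T = min (d + \<beta>0) (e + k + 1)"
  have T2: "2 * T = tgt + 1" using hb unfolding T_def tgt_def d_def by (simp add: min_def)
  have "T \<le> vF 2 + k + 1" unfolding T_def e_def by simp
  then obtain a c where ac: "a \<noteq> 0" "vF a = k" "F.vge c 1"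
      "F.vge (u - 2 * c - c\<^sup>2 + n * a\<^sup>2) T"
    using F.iter[OF fr_F e_pos nf(1,2) u k0 ke] by blast
  define P where "P = u - 2 * c - c\<^sup>2 + n * a\<^sup>2"
  define Q where "Q = - (a * (2 * (1 + c) + a * t))"
  define z where "z = i c + i a * \<pi>"
  define Yz where "Yz = 1 + z"
  have zg: "E.vge z 1"
  proof -
    have "E.vge (i c) (2 * 1)" using vge_i[OF ac(3)] .
    then have g1: "E.vge (i c) 1" by (rule E.vge_mono) simp
    have "vE (i a * \<pi>) = 2 * k + 1" using E.vmult[of "i a" \<pi>] ac pi_nz unifE vEi by simp
    then have "E.vge (i a * \<pi>) 1" using k0 by (simp add: E.vge_def)
    then show ?thesis unfolding z_def using g1 by (intro E.vge_add)
  qed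
  have Yz: "Yz \<noteq> 0" "vE Yz = 0" using E.unit_1plus[OF zg] Yz_def by auto
  have Yz2: "Yz\<^sup>2 \<noteq> 0" "vE (Yz\<^sup>2) = 0" using Yz E.vsq by auto
  have ident: "i (1 + u) - Yz\<^sup>2 = i P + i Q * \<pi>"
  proof -
    have "i (1 + u) - Yz\<^sup>2 - (i P + i Q * \<pi>) = - ((i a)\<^sup>2 * (\<pi>\<^sup>2 - (i t * \<pi> - i n)))"
      unfolding P_def Q_def Yz_def z_def by (simp add: power2_eq_square algebra_simps)
    then show ?thesis using pi2 by simp
  qed
  define Y where "Y = inverse Yz"
  have Yn: "Y \<noteq> 0" using Yz Y_def by simp
  have Yeq: "Y\<^sup>2 * i (1 + u) - 1 = (i P + i Q * \<pi>) / Yz\<^sup>2"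
    using ident Yz unfolding Y_def by (simp add: field_simps power2_eq_square)
  have Pg: "E.vge (i P) (tgt + 1)" using vge_i[OF ac(4)] T2 unfolding P_def by simp
  have u1: "1 + c \<noteq> 0" "vF (1 + c) = 0" using F.unit_1plus[OF ac(3)] by auto
  have W1: "vF (2 * (1 + c)) = e" "2 * (1 + c) \<noteq> 0"
    using u1 F.vmult[of 2 "1 + c"] e_def by (auto simp del: distrib_left_numeral)
  have W2: "vF (a * t) = k + \<beta>0" "a * t \<noteq> 0" using F.vmult[of a t] ac tf vt by auto
  show ?thesis
  proof (cases "k + \<beta>0 = e")
    case False
    have W: "2 * (1 + c) + a * t \<noteq> 0 \<and> vF (2 * (1 + c) + a * t) = min e (k + \<beta>0)"
    proof (cases "e < k + \<beta>0")
      case True then show ?thesis using F.strict[of "2 * (1 + c)" "a * t"] W1 W2 by simp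
    next
      case False
      then have "k + \<beta>0 < e" using \<open>k + \<beta>0 \<noteq> e\<close> by simp
      then show ?thesis using F.strict[of "a * t" "2 * (1 + c)"] W1 W2 by (simp add: add.commute)
    qed
    have Qv: "Q \<noteq> 0" "vF Q = k + min e (k + \<beta>0)" using W ac F.vmult unfolding Q_def by auto
    have QE: "i Q * \<pi> \<noteq> 0" "vE (i Q * \<pi>) = tgt"
      using Qv E.vmult[of "i Q" \<pi>] vEi[of Q] pi_nz unifE hb unfolding tgt_def d_def
      by (auto simp: min_def)
    have "i Q * \<pi> + i P \<noteq> 0 \<and> vE (i Q * \<pi> + i P) = tgt"
      using E.det[OF QE Pg] by simp
    then have S: "i P + i Q * \<pi> \<noteq> 0" "vE (i P + i Q * \<pi>) = tgt" by (auto simp: add.commute)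
    have "Y\<^sup>2 * i (1 + u) - 1 \<noteq> 0" "vE (Y\<^sup>2 * i (1 + u) - 1) = tgt"
      using Yeq S Yz2 E.vdiv[of "i P + i Q * \<pi>" "Yz\<^sup>2"] by auto
    moreover have "E.vge (Y\<^sup>2 * i (1 + u) - 1) tgt" using calculation by (simp add: E.vge_def)
    ultimately show ?thesis using Yn unfolding tgt_def e_def by blast
  next
    case True
    have "F.vge (2 * (1 + c) + a * t) e"
      using W1 W2 True by (intro F.vge_add) (auto simp: F.vge_def)
    then have "F.vge Q (k + e)" unfolding Q_def using F.vge_mult[OF F.vge_val[of a]] ac by simp
    then have "E.vge (i Q) (2 * (k + e))" by (rule vge_i)
    then have "E.vge (i Q * \<pi>) (2 * (k + e) + 1)" using E.vge_mult[OF _ E.vge_val[of \<pi>]] unifE by simp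
    moreover have "tgt = 2 * (k + e) + 1" using True hb unfolding tgt_def by (simp add: min_def)
    ultimately have "E.vge (i Q * \<pi>) tgt" by simp
    then have "E.vge (i P + i Q * \<pi>) tgt" using Pg by (intro E.vge_add) (auto intro: E.vge_mono)
    then have "E.vge (Y\<^sup>2 * i (1 + u) - 1) tgt" using Yeq E.vge_div_unit[OF Yz2] by simp
    moreover have "2*k+1 + b = 2 * vF 2" using True hb e_def by simp
    ultimately show ?thesis using Yn unfolding tgt_def e_def by blast
  qed
qed

end

lemma ring_id: "(1 - a) * (R + 1) - 1 = - a + R * (1 - (a::'a::comm_ring_1))"
  by (simp add: algebra_simps)

context qext2 begin

lemma E_bound:
  assumes ns: "\<not> (\<exists>c. c \<noteq> 0 \<and> X = c\<^sup>2)" and y: "y \<noteq> 0" "y\<^sup>2 * X - 1 \<noteq> 0"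
  shows "vE (y\<^sup>2 * X - 1) \<le> 4 * vF 2"
proof (rule ccontr)
  assume "\<not> vE (y\<^sup>2 * X - 1) \<le> 4 * vF 2"
  then have "E.vge (y\<^sup>2 * X - 1) (2 * vE 2 + 1)" using vE2 by (simp add: E.vge_def)
  moreover have "0 < vE 2" using e_pos vE2 by simp
  ultimately have "\<exists>w. w \<noteq> 0 \<and> y\<^sup>2 * X = w\<^sup>2" using E.hensel[OF vc_E] by blast
  then obtain w where w: "w \<noteq> 0" "y\<^sup>2 * X = w\<^sup>2" by blast
  then have "X = (w / y)\<^sup>2" using y by (simp add: power_divide field_simps)
  moreover have "w / y \<noteq> 0" using w y by simp
  ultimately show False using ns by blast
qed

lemma main:
  assumes \<kappa>_nz: "\<kappa> \<noteq> 0" and \<kappa>_nsq: "\<not> (\<exists>c. c \<noteq> 0 \<and> i \<kappa> = c\<^sup>2)"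
  shows "\<exists>dF::int. qdef vF \<kappa> = ereal (real_of_int dF) \<and>
     (qdef vE (i \<kappa>) = gFb (vF 2) b (qdef vF \<kappa>) \<or>
      (dF = 2 * vF 2 - b \<and> gFb (vF 2) b (qdef vF \<kappa>) \<le> qdef vE (i \<kappa>)))"
proof -
  define e where "e = vF 2"
  have tf: "t \<noteq> 0" "2 * vF t = b + 1" "b < 2 * e" using bfacts e_def by auto
  have nf: "n \<noteq> 0" "vF n = 1" "1 \<le> b" using nfacts by auto
  have ep: "0 < e" using e_pos e_def by simp
  have vE2': "0 < vE 2" using vE2 ep e_def by simp
  have nsqF: "\<not> (\<exists>c. c \<noteq> 0 \<and> \<kappa> = c\<^sup>2)"
  proof
    assume "\<exists>c. c \<noteq> 0 \<and> \<kappa> = c\<^sup>2"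
    then obtain c where "c \<noteq> 0" "\<kappa> = c\<^sup>2" by blast
    then have "i c \<noteq> 0 \<and> i \<kappa> = (i c)\<^sup>2" by simp
    then show False using \<kappa>_nsq by blast
  qed
  show ?thesis
  proof (cases "odd (vF \<kappa>)")
    case True
    have DF: "qdef vF \<kappa> = 0" using True nsqF unfolding qdef_def by simp
    obtain j where j: "vF \<kappa> = 2 * j + 1" using True by (metis oddE)
    obtain C where C: "C \<noteq> 0" "vF C = - j" using F.exists_val by blast
    define x' where "x' = C\<^sup>2 * \<kappa> / n"
    have x'nz: "x' \<noteq> 0" using C \<kappa>_nz nf x'_def by simp
    have vx': "vF x' = 0"
      using F.vdiv[of "C\<^sup>2 * \<kappa>" n] F.vmult[of "C\<^sup>2" \<kappa>] F.vsq[of C] C \<kappa>_nz nf j x'_def by simp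
    have mx: "- x' \<noteq> 0" "even (vF (- x'))" using x'nz vx' by auto
    obtain C' where C': "C' \<noteq> 0" "F.vge (C'\<^sup>2 * (- x') - 1) (2 * vF 2) \<or> F.good (C'\<^sup>2 * (- x') - 1)"
      using F.normalize[OF fr_F e_pos mx] by blast
    define u' where "u' = C'\<^sup>2 * (- x') - 1"
    have "\<exists>Y0. Y0 \<noteq> 0 \<and> E.vge (Y0\<^sup>2 * i (1 + u') - 1) (b + 1)"
    proof (cases "F.vge u' (2 * vF 2)")
      case True
      then have "E.vge (i u') (2 * (2 * vF 2))" by (rule vge_i)
      moreover have "b + 1 \<le> 2 * (2 * vF 2)" using tf ep e_def by simp
      ultimately have "E.vge (i u') (b + 1)" by (rule E.vge_mono)
      then have "E.vge (1\<^sup>2 * i (1 + u') - 1) (b + 1)" by simp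
      then show ?thesis by (intro exI[of _ 1]) auto
    next
      case False
      then have g: "F.good u'" using C' u'_def by auto
      then have gu: "u' \<noteq> 0" "odd (vF u')" "0 < vF u'" "vF u' < 2 * vF 2" unfolding F.good_def by auto
      then obtain k where k: "vF u' = 2 * k + 1" by (metis oddE)
      have k0: "0 \<le> k" "k < vF 2" using k gu by auto
      obtain Y0 where Y0: "Y0 \<noteq> 0" "E.vge (Y0\<^sup>2 * i (1+u') - 1) (min (2*(2*k+1) + b) ((2*k+1) + 2 * vF 2))"
        using constr[OF gu(1) k k0] by blast
      have "b + 1 \<le> min (2*(2*k+1) + b) ((2*k+1) + 2 * vF 2)" using k0 tf e_def by simp
      then show ?thesis using Y0 E.vge_mono by blast
    qed
    then obtain Y0 where Y0: "Y0 \<noteq> 0" "E.vge (Y0\<^sup>2 * i (1 + u') - 1) (b + 1)" by blast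
    define R where "R = Y0\<^sup>2 * i (1 + u') - 1"
    define M where "M = Y0 * i C' * i C / \<pi>"
    have Mnz: "M \<noteq> 0" using Y0 C C' pi_nz M_def by simp
    have inrel: "i n = \<pi> * (i t - \<pi>)" using pi2 by (simp add: power2_eq_square algebra_simps)
    have kap: "i C ^ 2 * i \<kappa> = i x' * i n" using nf unfolding x'_def by simp
    have "M\<^sup>2 * i \<kappa> = (Y0\<^sup>2 * (i C')\<^sup>2) * ((i C)\<^sup>2 * i \<kappa>) / \<pi>\<^sup>2"
      unfolding M_def by (simp add: power_mult_distrib power_divide)
    also have "\<dots> = (Y0\<^sup>2 * (i C')\<^sup>2) * (i x' * (\<pi> * (i t - \<pi>))) / \<pi>\<^sup>2" using kap inrel by simp
    also have "\<dots> = (1 - i t / \<pi>) * (Y0\<^sup>2 * ((i C')\<^sup>2 * (- i x')))"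
      using pi_nz by (simp add: field_simps power2_eq_square)
    also have "\<dots> = (1 - i t / \<pi>) * (R + 1)" unfolding R_def u'_def by simp
    finally have "M\<^sup>2 * i \<kappa> - 1 = (1 - i t / \<pi>) * (R + 1) - 1" by simp
    also have "\<dots> = - (i t / \<pi>) + R * (1 - i t / \<pi>)" by (rule ring_id)
    finally have Meq: "M\<^sup>2 * i \<kappa> - 1 = - (i t / \<pi>) + R * (1 - i t / \<pi>)" .
    have vtp: "i t / \<pi> \<noteq> 0" "vE (i t / \<pi>) = b" using E.vdiv[of "i t" \<pi>] vEi[of t] tf pi_nz unifE by auto
    have "E.vge (1 - i t / \<pi>) 0"
      using vtp nf by (intro E.vge_diff) (auto simp: E.vge_def)
    then have "E.vge (R * (1 - i t / \<pi>)) (b + 1 + 0)" using Y0(2) R_def E.vge_mult by blast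
    then have "- (i t / \<pi>) + R * (1 - i t / \<pi>) \<noteq> 0 \<and> vE (- (i t / \<pi>) + R * (1 - i t / \<pi>)) = b"
      using E.det[of "- (i t / \<pi>)" b "R * (1 - i t / \<pi>)"] vtp by simp
    then have X: "M\<^sup>2 * i \<kappa> - 1 \<noteq> 0" "vE (M\<^sup>2 * i \<kappa> - 1) = b" using Meq by auto
    have nsX: "\<not> (\<exists>c. c \<noteq> 0 \<and> M\<^sup>2 * i \<kappa> = c\<^sup>2)" using E.sq_scale_iff[OF Mnz] \<kappa>_nsq by blast
    have "qdef vE (M\<^sup>2 * i \<kappa>) = ereal (real_of_int b)"
      using E.qdef_odd[OF vE2' nsX X] b_odd nf tf vE2 e_def by simp
    then have DE: "qdef vE (i \<kappa>) = ereal (real_of_int b)"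
      using E.qdef_scale[OF Mnz, of "i \<kappa>"] \<kappa>_nz by simp
    have "gFb (vF 2) b (qdef vF \<kappa>) = ereal (real_of_int b)"
      using DF gFb_int[of "vF 2" b 0] tf e_def by (simp add: min_def zero_ereal_def)
    then show ?thesis using DF DE by (intro exI[of _ 0]) simp
  next
    case False
    then have ev: "even (vF \<kappa>)" by simp
    obtain C where C: "C \<noteq> 0" "F.vge (C\<^sup>2 * \<kappa> - 1) (2 * vF 2) \<or> F.good (C\<^sup>2 * \<kappa> - 1)"
      using F.normalize[OF fr_F e_pos \<kappa>_nz ev] by blast
    define x where "x = C\<^sup>2 * \<kappa>"
    define u where "u = x - 1"
    have xu: "x = 1 + u" using u_def by simp
    have nsx: "\<not> (\<exists>c. c \<noteq> 0 \<and> x = c\<^sup>2)" unfolding x_def using F.sq_scale_iff[OF C(1), of \<kappa>] nsqF by simp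
    have iC: "i C \<noteq> 0" using C by simp
    have nsix: "\<not> (\<exists>c. c \<noteq> 0 \<and> i x = c\<^sup>2)"
      using E.sq_scale_iff[OF iC, of "i \<kappa>"] \<kappa>_nsq x_def by simp
    have un: "u \<noteq> 0"
    proof
      assume "u = 0" then have "x = 1\<^sup>2" using xu by simp
      then have "\<exists>c. c \<noteq> 0 \<and> x = c\<^sup>2" by (intro exI[of _ 1]) simp
      then show False using nsx by blast
    qed
    have xnz: "x \<noteq> 0" using C \<kappa>_nz x_def by simp
    have DFx: "qdef vF \<kappa> = qdef vF x" using F.qdef_scale[OF C(1) \<kappa>_nz] x_def by simp
    have DEx: "qdef vE (i \<kappa>) = qdef vE (i x)" using E.qdef_scale[OF iC, of "i \<kappa>"] \<kappa>_nz x_def by simp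
    have vix: "vE (i x) = 0"
    proof -
      have "F.vge u 1" using C unfolding u_def x_def F.good_def F.vge_def using ep e_def by auto
      then have "vF x = 0" using F.unit_1plus[of u] xu by simp
      then show ?thesis using vEi xnz by simp
    qed
    show ?thesis
    proof (cases "F.good u")
      case True
      then have gu: "odd (vF u)" "0 < vF u" "vF u < 2 * vF 2" unfolding F.good_def by auto
      then obtain k where k: "vF u = 2 * k + 1" by (metis oddE)
      have k0: "0 \<le> k" "k < vF 2" using k gu by auto
      have DF: "qdef vF \<kappa> = ereal (real_of_int (2*k+1))"
        using F.qdef_odd[OF e_pos nsx] un k gu u_def DFx by simp
      define tgt where "tgt = min (2*(2*k+1) + b) ((2*k+1) + 2 * vF 2)"
      have gq: "gFb (vF 2) b (qdef vF \<kappa>) = ereal (real_of_int tgt)"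
        unfolding DF gFb_int tgt_def by (simp add: algebra_simps)
      obtain Y where Y: "Y \<noteq> 0" "E.vge (Y\<^sup>2 * i x - 1) tgt"
          "2*k+1 + b \<noteq> 2 * vF 2 \<longrightarrow> Y\<^sup>2 * i x - 1 \<noteq> 0 \<and> vE (Y\<^sup>2 * i x - 1) = tgt"
        using constr[OF un k k0] xu tgt_def by auto
      show ?thesis
      proof (cases "2*k+1 + b = 2 * vF 2")
        case True
        have "ereal (real_of_int tgt) \<le> qdef vE (i x)"
          using E.qdef_ge[OF nsix _ Y(1) Y(2)] vix by simp
        then show ?thesis using DF DEx gq True by (intro exI[of _ "2*k+1"]) auto
      next
        case False
        have Yn: "Y\<^sup>2 \<noteq> 0" using Y by simp
        have nsY: "\<not> (\<exists>c. c \<noteq> 0 \<and> Y\<^sup>2 * i x = c\<^sup>2)" using E.sq_scale_iff[OF Y(1)] nsix by blast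
        have tb: "odd tgt" "0 < tgt" "tgt < 2 * vE 2"
          using b_odd k0 tf nf vE2 e_def unfolding tgt_def by (auto simp: min_def)
        have "qdef vE (Y\<^sup>2 * i x) = ereal (real_of_int tgt)"
          using E.qdef_odd[OF vE2' nsY] Y(3) False tb by simp
        then have "qdef vE (i x) = ereal (real_of_int tgt)"
          using E.qdef_scale[OF Y(1), of "i x"] xnz by simp
        then show ?thesis using DF DEx gq by (intro exI[of _ "2*k+1"]) auto
      qed
    next
      case False
      then have ug: "F.vge u (2 * vF 2)" using C u_def x_def by auto
      have "ereal (real_of_int (2 * vF 2)) \<le> qdef vF x"
        using F.qdef_ge[OF nsx, of 1 "2 * vF 2"] ug u_def xnz ev C x_def F.vmult F.vsq by simp
      moreover have "qdef vF x \<le> ereal (real_of_int (2 * vF 2))"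
      proof (rule F.qdef_le[OF nsx])
        show "even (vF x)" using F.vmult[of "C\<^sup>2" \<kappa>] F.vsq[of C] C \<kappa>_nz ev x_def by simp
        fix y assume y: "y \<noteq> 0" "y\<^sup>2 * x - 1 \<noteq> 0"
        show "vF (y\<^sup>2 * x - 1) \<le> 2 * vF 2"
        proof (rule ccontr)
          assume "\<not> vF (y\<^sup>2 * x - 1) \<le> 2 * vF 2"
          then have "F.vge (y\<^sup>2 * x - 1) (2 * vF 2 + 1)" by (simp add: F.vge_def)
          then have "E.vge (i (y\<^sup>2 * x - 1)) (2 * (2 * vF 2 + 1))" by (rule vge_i)
          then have "E.vge ((i y)\<^sup>2 * i x - 1) (2 * vE 2 + 1)" using vE2 by (auto intro: E.vge_mono)
          then have "\<exists>w. w \<noteq> 0 \<and> (i y)\<^sup>2 * i x = w\<^sup>2" by (rule E.hensel[OF vc_E vE2'])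
          then obtain w where w: "w \<noteq> 0" "(i y)\<^sup>2 * i x = w\<^sup>2" by blast
          then have "i x = (w / i y)\<^sup>2" using y by (simp add: power_divide field_simps)
          moreover have "w / i y \<noteq> 0" using w y by simp
          ultimately show False using nsix by blast
        qed
      qed
      ultimately have DF: "qdef vF \<kappa> = ereal (real_of_int (2 * vF 2))" using DFx by simp
      have "ereal (real_of_int (4 * vF 2)) \<le> qdef vE (i x)"
      proof -
        have "E.vge (i u) (2 * (2 * vF 2))" using vge_i[OF ug] .
        then have "E.vge (1\<^sup>2 * i x - 1) (4 * vF 2)" using xu by simp
        then show ?thesis using E.qdef_ge[OF nsix _ _, of 1 "4 * vF 2"] vix by simp
      qed
      moreover have "qdef vE (i x) \<le> ereal (real_of_int (4 * vF 2))"
        by (rule E.qdef_le[OF nsix]) (use vix E_bound[OF nsix] in auto)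
      ultimately have DE: "qdef vE (i \<kappa>) = ereal (real_of_int (4 * vF 2))" using DEx by simp
      have "gFb (vF 2) b (qdef vF \<kappa>) = ereal (real_of_int (4 * vF 2))"
        unfolding DF gFb_int using nf by simp
      then show ?thesis using DF DE by (intro exI[of _ "2 * vF 2"]) simp
    qed
  qed
qed

end

theorem lemma2p1:
  fixes vF :: "'f::field_char_0 \<Rightarrow> int" and vE :: "'e::field_char_0 \<Rightarrow> int"
    and i :: "'f \<Rightarrow> 'e" and s :: "'e \<Rightarrow> 'e" and \<pi> :: 'e and b :: int and \<kappa> :: 'f
  assumes F: "local_field_over_Q2 vF"
    and E: "local_field_over_Q2 vE"
    and emb: "field_emb i"
    and quad: "quadratic_over i"
    and ram: "\<And>x. x \<noteq> 0 \<Longrightarrow> vE (i x) = 2 * vF x"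
    and s_add: "\<And>x y. s (x + y) = s x + s y"
    and s_mult: "\<And>x y. s (x * y) = s x * s y"
    and s_bij: "bij s"
    and s_fix: "\<And>x. s (i x) = i x"
    and s_nontriv: "s \<noteq> id"
    and unif: "vE \<pi> = 1" and pi_nz: "\<pi> \<noteq> 0"
    and b_def: "b = vE (s \<pi> - \<pi>) - 1"
    and b_odd: "odd b"
    and \<kappa>_nz: "\<kappa> \<noteq> 0"
    and \<kappa>_nsq: "\<not> (\<exists>c. c \<noteq> 0 \<and> i \<kappa> = c\<^sup>2)"
  shows "qdef vE (i \<kappa>) \<ge> gFb (abs_ram_index vF) b (qdef vF \<kappa>)
    \<and> (qdef vF \<kappa> \<noteq> ereal (real_of_int (2 * abs_ram_index vF - b)) \<longrightarrow>
         qdef vE (i \<kappa>) = gFb (abs_ram_index vF) b (qdef vF \<kappa>))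
    \<and> (\<forall>\<delta>::int. 0 \<le> \<delta> \<longrightarrow> qdef vF \<kappa> \<ge> ereal (real_of_int \<delta>) \<longrightarrow>
         qdef vE (i \<kappa>) \<ge> gFb (abs_ram_index vF) b (ereal (real_of_int \<delta>))
         \<and> gFb (abs_ram_index vF) b (ereal (real_of_int \<delta>)) \<ge> ereal (real_of_int b))"
proof -
  interpret Q: qext vF vE i s \<pi> b
    by unfold_locales (use F E emb quad ram s_add s_mult s_fix s_nontriv unif pi_nz b_def b_odd in auto)
  obtain t n where tn: "\<pi>\<^sup>2 = i t * \<pi> - i n" "s \<pi> = i t - \<pi>" using Q.ext_struct by blast
  interpret Q2: qext2 vF vE i s \<pi> b t n
    by (unfold_locales; fact tn)
  obtain dF where dF: "qdef vF \<kappa> = ereal (real_of_int dF)"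
      "qdef vE (i \<kappa>) = gFb (vF 2) b (qdef vF \<kappa>) \<or>
       (dF = 2 * vF 2 - b \<and> gFb (vF 2) b (qdef vF \<kappa>) \<le> qdef vE (i \<kappa>))"
    using Q2.main[OF \<kappa>_nz \<kappa>_nsq] by blast
  have be: "b < 2 * vF 2" using Q2.bfacts by simp
  show ?thesis unfolding abs_ram_index_def using final[OF dF be] .
qed

end
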